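(* Let $d\ge3$ and suppose $\mathbf z_1,\dots,\mathbf z_d\in\mathbb R^d$ are linearly independent (and $\boldsymbol\alpha_1,\boldsymbol\alpha_2$ are well defined). Then \[|\boldsymbol\alpha_1-\boldsymbol\alpha_2|=\frac{\det\underline\Lambda_{2,d-2}\cdot\det\Lambda_{1,d}}{\det\underline\Lambda_{1,d-1}\cdot\det\underline\Lambda_{2,d-1}}.\]
   Context: $|\cdot|$ is the Euclidean norm. For $\mathbf x=(x_1,\dots,x_d)\in\mathbb R^d$ write $\underline{\mathbf x}=(x_1,\dots,x_{d-1})$. Let $\pi_d=\{\mathbf x\in\mathbb R^d:x_d=1\}$. For vectors $\mathbf z_1,\dots,\mathbf z_d$: $\det\Lambda_{1,d}=|\det(\mathbf z_1,\dots,\mathbf z_d)|$; for $1\le l\le d-1$, $\det\underline\Lambda_{k,l}=|\underline{\mathbf z_k}\wedge\dots\wedge\underline{\mathbf z_{k+l-1}}|$, the $l$-dimensional volume of the parallelepiped spanned by $\underline{\mathbf z_k},\dots,\underline{\mathbf z_{k+l-1}}$. When $\underline{\mathbf z_k},\dots,\underline{\mathbf z_{k+d-2}}$ are linearly independent, $\boldsymbol\alpha_k$ denotes the unique point of $\pi_d$ orthogonal to $\mathbf z_k,\dots,\mathbf z_{k+d-2}$; here $\boldsymbol\alpha_1\perp\mathbf z_1,\dots,\mathbf z_{d-1}$ and $\boldsymbol\alpha_2\perp\mathbf z_2,\dots,\mathbf z_d$. *)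

theory Defs
  imports Complex_Main "Jordan_Normal_Form.Determinant"
begin

text \<open>Vectors of R^d are represented as real vec of dimension d; the paper's
  coordinate x_i is the component with index i-1. The vectors z_1..z_d are
  given by a function z :: nat => real vec, used at indices 1..d.\<close>

definition eucl_norm :: "real vec \<Rightarrow> real" where
  "eucl_norm v = sqrt (v \<bullet> v)"

definition underline :: "real vec \<Rightarrow> real vec" where
  "underline x = vec (dim_vec x - 1) (\<lambda>i. x $ i)"

definition lin_indep_family :: "nat \<Rightarrow> nat \<Rightarrow> (nat \<Rightarrow> real vec) \<Rightarrow> bool" where
  "lin_indep_family n m vs \<longleftrightarrow>
     (\<forall>c :: nat \<Rightarrow> real.
        vec n (\<lambda>i. \<Sum>j<m. c j * (vs j $ i)) = 0\<^sub>v n \<longrightarrow> (\<forall>j<m. c j = 0))"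

text \<open>l-dimensional volume of the parallelepiped spanned by vs 0..l-1
  (norm of the wedge product), via the Gram determinant.\<close>
definition par_volume :: "nat \<Rightarrow> (nat \<Rightarrow> real vec) \<Rightarrow> real" where
  "par_volume l vs = sqrt (det (mat l l (\<lambda>(i,j). vs i \<bullet> vs j)))"

definition detLam_under :: "(nat \<Rightarrow> real vec) \<Rightarrow> nat \<Rightarrow> nat \<Rightarrow> real" where
  "detLam_under z k l = par_volume l (\<lambda>j. underline (z (k + j)))"

definition detLam_full :: "nat \<Rightarrow> (nat \<Rightarrow> real vec) \<Rightarrow> real" where
  "detLam_full d z = \<bar>det (mat_of_cols d (map z [1..<d+1]))\<bar>"

definition pi_d :: "nat \<Rightarrow> real vec set" where
  "pi_d d = {x. dim_vec x = d \<and> x $ (d - 1) = 1}"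

definition alpha :: "nat \<Rightarrow> (nat \<Rightarrow> real vec) \<Rightarrow> nat \<Rightarrow> real vec" where
  "alpha d z k = (THE a. a \<in> pi_d d \<and> (\<forall>j\<in>{k..k+d-2}. a \<bullet> z j = 0))"

end

theory Submission
  imports Defs
begin

definition colmat :: "nat \<Rightarrow> nat \<Rightarrow> (nat \<Rightarrow> real vec) \<Rightarrow> real mat" where
  "colmat n m f = mat n m (\<lambda>(i,j). f j $ i)"

lemma colmat_carrier[simp]: "colmat n m f \<in> carrier_mat n m"
  unfolding colmat_def by simp

lemma dim_colmat[simp]: "dim_row (colmat n m f) = n" "dim_col (colmat n m f) = m"
  unfolding colmat_def by simp_all

lemma index_colmat[simp]: "i < n \<Longrightarrow> j < m \<Longrightarrow> colmat n m f $$ (i,j) = f j $ i"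
  unfolding colmat_def by simp

lemma col_colmat: "j < m \<Longrightarrow> f j \<in> carrier_vec n \<Longrightarrow> col (colmat n m f) j = f j"
  unfolding colmat_def by (intro eq_vecI) auto

lemma single_entry_row:
  fixes A :: "real mat"
  assumes A: "A \<in> carrier_mat n n" and r: "r < n" and c: "c < n"
    and z: "\<And>j. j < n \<Longrightarrow> j \<noteq> c \<Longrightarrow> A $$ (r,j) = 0"
  shows "det A = A $$ (r,c) * cofactor A r c"
proof -
  have "det A = (\<Sum>j<n. A $$ (r,j) * cofactor A r j)" by (rule laplace_expansion_row[OF A r])
  also have "\<dots> = (\<Sum>j\<in>{c}. A $$ (r,j) * cofactor A r j)"
    by (rule sum.mono_neutral_right) (use c z in auto)
  finally show ?thesis by simp
qed

lemma gram_prod: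
  assumes f: "\<And>i. i < m \<Longrightarrow> f i \<in> carrier_vec n"
    and g: "\<And>j. j < k \<Longrightarrow> g j \<in> carrier_vec n"
  shows "mat m k (\<lambda>(i,j). f i \<bullet> g j) = transpose_mat (colmat n m f) * colmat n k g"
  by (rule eq_matI) (auto simp: col_colmat f g)

lemma det_gram_sq:
  assumes f: "\<And>i. i < n \<Longrightarrow> f i \<in> carrier_vec n"
    and g: "\<And>j. j < n \<Longrightarrow> g j \<in> carrier_vec n"
  shows "det (mat n n (\<lambda>(i,j). f i \<bullet> g j)) = det (colmat n n f) * det (colmat n n g)"
proof -
  have "det (mat n n (\<lambda>(i,j). f i \<bullet> g j)) = det (transpose_mat (colmat n n f) * colmat n n g)"
    using gram_prod[OF f g] by simp
  also have "\<dots> = det (transpose_mat (colmat n n f)) * det (colmat n n g)"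
    by (rule det_mult[of _ n]) auto
  also have "\<dots> = det (colmat n n f) * det (colmat n n g)"
    by (simp add: det_transpose[of _ n])
  finally show ?thesis .
qed

lemma indep_mulvec:
  assumes "lin_indep_family n m vs" and x: "x \<in> carrier_vec m"
    and e: "colmat n m vs *\<^sub>v x = 0\<^sub>v n"
  shows "x = 0\<^sub>v m"
proof -
  have "vec n (\<lambda>i. \<Sum>j<m. x $ j * (vs j $ i)) = 0\<^sub>v n"
  proof (rule eq_vecI)
    fix i assume i: "i < dim_vec (0\<^sub>v n :: real vec)"
    have "(colmat n m vs *\<^sub>v x) $ i = 0" using e i by simp
    hence "(\<Sum>j<m. vs j $ i * x $ j) = 0"
      using i x by (simp add: colmat_def scalar_prod_def atLeast0LessThan)
    thus "vec n (\<lambda>i. \<Sum>j<m. x $ j * (vs j $ i)) $ i = 0\<^sub>v n $ i"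
      using i by (simp add: mult.commute)
  qed simp
  with assms(1) have "\<forall>j<m. x $ j = 0" unfolding lin_indep_family_def by blast
  thus ?thesis using x by (intro eq_vecI) auto
qed

lemma indep_det:
  assumes "lin_indep_family n n vs"
  shows "det (colmat n n vs) \<noteq> 0"
  using indep_mulvec[OF assms] det_0_iff_vec_prod_zero[OF colmat_carrier] by blast

lemma self_scalar_zero:
  fixes y :: "real vec"
  assumes "y \<in> carrier_vec n" "y \<bullet> y = 0"
  shows "y = 0\<^sub>v n"
proof (rule eq_vecI)
  fix i assume i: "i < dim_vec (0\<^sub>v n :: real vec)"
  have "(\<Sum>i\<in>{0..<n}. y $ i * y $ i) = 0" using assms unfolding scalar_prod_def by simp
  hence "\<forall>i\<in>{0..<n}. y $ i * y $ i = 0"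
    by (subst (asm) sum_nonneg_eq_0_iff) auto
  thus "y $ i = 0\<^sub>v n $ i" using i by simp
qed (use assms in simp)

lemma indep_gram_det:
  assumes ind: "lin_indep_family n m vs" and vs: "\<And>j. j < m \<Longrightarrow> vs j \<in> carrier_vec n"
  shows "det (mat m m (\<lambda>(i,j). vs i \<bullet> vs j)) \<noteq> 0"
proof
  let ?V = "colmat n m vs"
  assume "det (mat m m (\<lambda>(i,j). vs i \<bullet> vs j)) = 0"
  hence "det (transpose_mat ?V * ?V) = 0" using gram_prod[OF vs vs] by simp
  moreover have "transpose_mat ?V * ?V \<in> carrier_mat m m" by (rule mult_carrier_mat[of _ m n]) auto
  ultimately obtain v where v: "v \<in> carrier_vec m" "v \<noteq> 0\<^sub>v m" "(transpose_mat ?V * ?V) *\<^sub>v v = 0\<^sub>v m"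
    using det_0_iff_vec_prod_zero[of "transpose_mat ?V * ?V" m] by blast
  let ?y = "?V *\<^sub>v v"
  have y: "?y \<in> carrier_vec n" using mult_mat_vec_carrier[OF colmat_carrier v(1)] .
  have Vt: "transpose_mat ?V \<in> carrier_mat m n" using colmat_carrier by simp
  have "(transpose_mat ?V * ?V) *\<^sub>v v = transpose_mat ?V *\<^sub>v ?y"
    by (rule assoc_mult_mat_vec[OF Vt colmat_carrier v(1)])
  hence "transpose_mat ?V *\<^sub>v ?y = 0\<^sub>v m" using v(3) by metis
  hence "(transpose_mat ?V *\<^sub>v ?y) \<bullet> v = 0" using v(1) by (metis scalar_prod_left_zero)
  moreover have "(transpose_mat ?V *\<^sub>v ?y) \<bullet> v = ?y \<bullet> ?y"
    by (rule transpose_vec_mult_scalar[OF colmat_carrier v(1) y])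
  ultimately have "?y \<bullet> ?y = 0" by simp
  hence "?y = 0\<^sub>v n" by (rule self_scalar_zero[OF y])
  hence "v = 0\<^sub>v m" by (rule indep_mulvec[OF ind v(1)])
  with v show False by simp
qed

lemma underline_carrier[simp]: "x \<in> carrier_vec d \<Longrightarrow> underline x \<in> carrier_vec (d - 1)"
  unfolding underline_def by simp

lemma underline_carrier'[simp]: "x \<in> carrier_vec d \<Longrightarrow> underline x \<in> carrier_vec (d - Suc 0)"
  unfolding underline_def by simp

lemma underline_index[simp]: "i < dim_vec x - 1 \<Longrightarrow> underline x $ i = x $ i"
  unfolding underline_def by simp

lemma scalar_split:
  assumes a: "a \<in> carrier_vec d" and b: "b \<in> carrier_vec d" and d: "d \<ge> 1"
  shows "a \<bullet> b = underline a \<bullet> underline b + a $ (d-1) * b $ (d-1)"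
proof -
  have e: "{0..<d} = insert (d-1) {0..<d-1}" using d by auto
  have "a \<bullet> b = (\<Sum>i\<in>{0..<d}. a $ i * b $ i)" using b unfolding scalar_prod_def by simp
  also have "\<dots> = a $ (d-1) * b $ (d-1) + (\<Sum>i\<in>{0..<d-1}. a $ i * b $ i)" unfolding e by simp
  also have "(\<Sum>i\<in>{0..<d-1}. a $ i * b $ i) = underline a \<bullet> underline b"
    using a b unfolding scalar_prod_def underline_def by simp
  finally show ?thesis by simp
qed

lemma final_alg:
  fixes X ww G D1 D2 DZ c :: real
  assumes "X^2 = ww * G" "X * D1 = - c * G" "\<bar>DZ\<bar> = \<bar>c\<bar> * \<bar>D2\<bar>"
    "DZ \<noteq> 0" "D1 \<noteq> 0" "D2 \<noteq> 0" "G \<noteq> 0" "ww \<ge> 0"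
  shows "sqrt ww = sqrt G * \<bar>DZ\<bar> / (\<bar>D1\<bar> * \<bar>D2\<bar>)"
proof -
  have c: "c \<noteq> 0" using assms(3,4) by auto
  have "ww * G * D1^2 = (X*D1)^2" using assms(1) by (simp add: power_mult_distrib)
  also have "\<dots> = c^2 * G^2" using assms(2) by (simp add: power_mult_distrib)
  finally have "ww * G * D1^2 = c^2 * G^2" .
  hence e: "ww * D1^2 = c^2 * G" using assms(7) by (simp add: power2_eq_square) 
  have "c^2 * G \<ge> 0" unfolding e[symmetric] using assms(8) by simp
  hence G: "G > 0" using c assms(7) by (simp add: zero_le_mult_iff) 
  have "ww = c^2 * G / D1^2" using e assms(5) by (simp add: field_simps)
  hence "sqrt ww = \<bar>c\<bar> * sqrt G / \<bar>D1\<bar>" by (simp add: real_sqrt_mult real_sqrt_divide)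
  also have "\<bar>c\<bar> = \<bar>DZ\<bar> / \<bar>D2\<bar>" using assms(3,6) by simp
  finally show ?thesis by (simp add: ac_simps)
qed

lemma indep_shift:
  assumes "lin_indep_family n (Suc m) f"
  shows "lin_indep_family n m (\<lambda>j. f (Suc j))"
  unfolding lin_indep_family_def
proof (intro allI impI)
  fix c :: "nat \<Rightarrow> real" and j
  assume h: "vec n (\<lambda>i. \<Sum>j<m. c j * (f (Suc j) $ i)) = 0\<^sub>v n" and j: "j < m"
  define c' where "c' = case_nat 0 c"
  have "vec n (\<lambda>i. \<Sum>j<Suc m. c' j * (f j $ i)) = vec n (\<lambda>i. \<Sum>j<m. c j * (f (Suc j) $ i))"
    unfolding sum.lessThan_Suc_shift c'_def by simp
  with h assms have "\<forall>j<Suc m. c' j = 0" unfolding lin_indep_family_def by metis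
  with j show "c j = 0" unfolding c'_def by fastforce
qed

lemma ww_nonneg: "(w :: real vec) \<bullet> w \<ge> 0"
  unfolding scalar_prod_def by (intro sum_nonneg) simp

lemma alpha_props:
  assumes d: "d \<ge> 2" and zc: "\<forall>j\<in>{k..k+d-2}. z j \<in> carrier_vec d"
    and ind: "lin_indep_family (d-1) (d-1) (\<lambda>j. underline (z (k+j)))"
  shows "alpha d z k \<in> carrier_vec d \<and> alpha d z k $ (d-1) = 1 \<and>
         (\<forall>j\<in>{k..k+d-2}. alpha d z k \<bullet> z j = 0)"
proof -
  define n where "n = d - 1"
  have n1: "n \<ge> 1" and dn: "d = Suc n" using d unfolding n_def by auto
  define U where "U = colmat n n (\<lambda>j. underline (z (k+j)))"
  define A where "A = transpose_mat U"
  define t where "t = vec n (\<lambda>j. z (k+j) $ n)"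
  have A: "A \<in> carrier_mat n n" unfolding A_def U_def by simp
  have zc': "\<And>j. j < n \<Longrightarrow> z (k+j) \<in> carrier_vec d" using zc unfolding n_def by auto
  have uc: "\<And>j. j < n \<Longrightarrow> underline (z (k+j)) \<in> carrier_vec n"
    using zc' underline_carrier unfolding n_def by blast
  have detA: "det A \<noteq> 0" unfolding A_def U_def
    using indep_det[OF ind[folded n_def]] det_transpose[OF colmat_carrier] by simp
  have Ax: "(A *\<^sub>v x) $ j = underline (z (k+j)) \<bullet> x" if "j < n" "x \<in> carrier_vec n" for j x
    using that uc[OF that(1)] unfolding A_def U_def by (simp add: col_colmat)
  have rng: "{k..k+d-2} = (\<lambda>j. k + j) ` {..<n}"
  proof -
    have "x \<in> (\<lambda>j. k+j) ` {..<n}" if "x \<in> {k..k+d-2}" for x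
      using d that by (intro image_eqI[of _ _ "x-k"]) (auto simp: n_def)
    moreover have "x \<in> {k..k+d-2}" if "x \<in> (\<lambda>j. k+j) ` {..<n}" for x
      using d that by (auto simp: n_def)
    ultimately show ?thesis by blast
  qed
  have char: "(a \<in> pi_d d \<and> (\<forall>j\<in>{k..k+d-2}. a \<bullet> z j = 0)) \<longleftrightarrow>
     (a \<in> carrier_vec d \<and> a $ n = 1 \<and> A *\<^sub>v underline a = - t)" for a
  proof -
    have "a \<in> pi_d d \<longleftrightarrow> a \<in> carrier_vec d \<and> a $ n = 1"
      unfolding pi_d_def n_def carrier_vec_def by auto
    moreover have "(\<forall>j\<in>{k..k+d-2}. a \<bullet> z j = 0) \<longleftrightarrow> A *\<^sub>v underline a = - t"
      if a: "a \<in> carrier_vec d" "a $ n = 1"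
    proof -
      have ua: "underline a \<in> carrier_vec n" using a unfolding n_def by simp
      have "a \<bullet> z (k+j) = (A *\<^sub>v underline a) $ j + t $ j" if j: "j < n" for j
      proof -
        have "a \<bullet> z (k+j) = underline a \<bullet> underline (z (k+j)) + a $ n * z (k+j) $ n"
          using scalar_split[OF a(1) zc'[OF j]] d unfolding n_def by simp
        also have "underline a \<bullet> underline (z (k+j)) = underline (z (k+j)) \<bullet> underline a"
          by (rule comm_scalar_prod[OF ua uc[OF j]])
        finally show ?thesis using Ax[OF j ua] a(2) j unfolding t_def by simp
      qed
      hence "(\<forall>j\<in>{k..k+d-2}. a \<bullet> z j = 0) \<longleftrightarrow> (\<forall>j<n. (A *\<^sub>v underline a) $ j = - t $ j)"
        unfolding rng by (auto simp: eq_neg_iff_add_eq_0)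
      also have "\<dots> \<longleftrightarrow> A *\<^sub>v underline a = - t"
      proof
        assume h: "\<forall>j<n. (A *\<^sub>v underline a) $ j = - t $ j"
        show "A *\<^sub>v underline a = - t"
          by (rule eq_vecI) (use h A in \<open>auto simp: t_def\<close>)
      next
        assume h: "A *\<^sub>v underline a = - t"
        show "\<forall>j<n. (A *\<^sub>v underline a) $ j = - t $ j" unfolding h t_def by simp
      qed
      finally show ?thesis .
    qed
    ultimately show ?thesis by blast
  qed
  obtain B where B: "B \<in> carrier_mat n n" "A * B = 1\<^sub>m n"
    using det_non_zero_imp_unit[OF A detA, of "()"] unfolding Units_def ring_mat_def by auto
  define x where "x = B *\<^sub>v (- t)"
  have xc: "x \<in> carrier_vec n" unfolding x_def t_def using B(1) by simp
  have Ax: "A *\<^sub>v x = - t"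
  proof -
    have "A *\<^sub>v x = (A * B) *\<^sub>v (- t)" unfolding x_def
      by (rule assoc_mult_mat_vec[symmetric, OF A B(1)]) (simp add: t_def)
    thus ?thesis using B(2) by (simp add: t_def)
  qed
  define a where "a = vec d (\<lambda>i. if i < n then x $ i else 1)"
  have ua: "underline a = x" unfolding a_def underline_def using xc dn by (intro eq_vecI) auto
  have ex: "a \<in> pi_d d \<and> (\<forall>j\<in>{k..k+d-2}. a \<bullet> z j = 0)"
    unfolding char ua using Ax dn unfolding a_def by simp
  have un: "b = a" if b: "b \<in> pi_d d \<and> (\<forall>j\<in>{k..k+d-2}. b \<bullet> z j = 0)" for b
  proof -
    have bb: "b \<in> carrier_vec d" "b $ n = 1" "A *\<^sub>v underline b = - t" using b unfolding char by auto
    have aa: "a \<in> carrier_vec d" "a $ n = 1" "A *\<^sub>v underline a = - t" using ex unfolding char by auto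
    have ubc: "underline b \<in> carrier_vec n" "underline a \<in> carrier_vec n"
      using bb aa unfolding n_def by auto
    have "A *\<^sub>v (underline b - underline a) = A *\<^sub>v underline b - A *\<^sub>v underline a"
      by (rule mult_minus_distrib_mat_vec[OF A ubc])
    also have "\<dots> = 0\<^sub>v n" using bb(3) aa(3) unfolding t_def by (intro eq_vecI) auto
    finally have "A *\<^sub>v (underline b - underline a) = 0\<^sub>v n" .
    moreover have "underline b - underline a \<in> carrier_vec n" using ubc by simp
    ultimately have "underline b - underline a = 0\<^sub>v n"
      using det_0_iff_vec_prod_zero[OF A] detA by blast
    note z0 = this
    have e: "b $ i = a $ i" if i: "i < n" for i
    proof -
      have "(underline b - underline a) $ i = 0" using z0 i by simp
      moreover have "(underline b - underline a) $ i = underline b $ i - underline a $ i"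
        using ubc i by simp
      moreover have "underline b $ i = b $ i" "underline a $ i = a $ i"
        using bb(1) aa(1) dn i by simp_all
      ultimately show ?thesis by simp
    qed
    show ?thesis using bb(1,2) aa(1,2) e dn by (intro eq_vecI) (auto simp: less_Suc_eq)
  qed
  have "alpha d z k = a" unfolding alpha_def
    by (rule the_equality) (use ex un in blast)+
  moreover have "a \<in> carrier_vec d" "a $ (d-1) = 1" using ex unfolding pi_d_def
    by (auto intro: carrier_vecI)
  ultimately show ?thesis using ex by (simp only:) blast
qed

theorem lemma5:
  fixes d :: nat and z :: "nat \<Rightarrow> real vec"
  assumes "d \<ge> 3"
    and "\<forall>k\<in>{1..d}. z k \<in> carrier_vec d"
    and "lin_indep_family d d (\<lambda>j. z (j + 1))"
    and "lin_indep_family (d - 1) (d - 1) (\<lambda>j. underline (z (1 + j)))"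
    and "lin_indep_family (d - 1) (d - 1) (\<lambda>j. underline (z (2 + j)))"
  shows "eucl_norm (alpha d z 1 - alpha d z 2) =
    (detLam_under z 2 (d - 2) * detLam_full d z) /
    (detLam_under z 1 (d - 1) * detLam_under z 2 (d - 1))"
proof -
  define n where "n = d - 1"
  have n2: "n \<ge> 2" and dn: "d = Suc n" using assms(1) by (auto simp: n_def)
  have zc: "\<And>j. 1 \<le> j \<Longrightarrow> j \<le> d \<Longrightarrow> z j \<in> carrier_vec d" using assms(2) by auto
  define u where "u j = underline (z j)" for j
  have uc: "\<And>j. 1 \<le> j \<Longrightarrow> j \<le> d \<Longrightarrow> u j \<in> carrier_vec n"
    using zc underline_carrier unfolding u_def n_def by blast
  have uz: "u j $ i = z j $ i" if "1 \<le> j" "j \<le> d" "i < n" for i j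
    using zc[OF that(1,2)] that(3) dn unfolding u_def by simp
  define A1 where "A1 = alpha d z 1"
  define A2 where "A2 = alpha d z 2"
  have P1: "A1 \<in> carrier_vec d \<and> A1 $ (d-1) = 1 \<and> (\<forall>j\<in>{1..1+d-2}. A1 \<bullet> z j = 0)"
    unfolding A1_def by (rule alpha_props) (use assms in auto)
  have P2: "A2 \<in> carrier_vec d \<and> A2 $ (d-1) = 1 \<and> (\<forall>j\<in>{2..2+d-2}. A2 \<bullet> z j = 0)"
    unfolding A2_def by (rule alpha_props) (use assms in auto)
  have A1c: "A1 \<in> carrier_vec d" and A1n: "A1 $ n = 1" using P1 unfolding n_def by auto
  have A2c: "A2 \<in> carrier_vec d" and A2n: "A2 $ n = 1" using P2 unfolding n_def by auto
  have A1o: "A1 \<bullet> z j = 0" if "1 \<le> j" "j \<le> n" for j using P1 that unfolding n_def by auto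
  have A2o: "A2 \<bullet> z j = 0" if "2 \<le> j" "j \<le> d" for j using P2 that by auto
  define \<delta> where "\<delta> = A1 - A2"
  have \<delta>c: "\<delta> \<in> carrier_vec d" unfolding \<delta>_def using A1c A2c by simp
  have \<delta>n: "\<delta> $ n = 0" unfolding \<delta>_def using A1c A2c A1n A2n dn by simp
  define w where "w = underline \<delta>"
  have wc: "w \<in> carrier_vec n" unfolding w_def n_def using \<delta>c by simp
  have dz: "\<delta> \<bullet> z j = w \<bullet> u j" if "1 \<le> j" "j \<le> d" for j
    using scalar_split[OF \<delta>c zc[OF that]] \<delta>n dn unfolding w_def u_def by simp
  have dz2: "\<delta> \<bullet> z j = A1 \<bullet> z j - A2 \<bullet> z j" if "1 \<le> j" "j \<le> d" for j
    unfolding \<delta>_def by (rule minus_scalar_prod_distrib[OF A1c A2c zc[OF that]])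
  have w0: "w \<bullet> u j = 0" if "2 \<le> j" "j \<le> n" for j
    using dz[of j] dz2[of j] A1o[of j] A2o[of j] that dn by simp
  have w1: "w \<bullet> u 1 = - (A2 \<bullet> z 1)"
    using dz[of 1] dz2[of 1] A1o[of 1] dn n2 by simp
  have nrm: "eucl_norm (alpha d z 1 - alpha d z 2) = sqrt (w \<bullet> w)"
    using scalar_split[OF \<delta>c \<delta>c] \<delta>n dn unfolding eucl_norm_def w_def \<delta>_def A1_def A2_def by simp

  have u1c: "u (1+j) \<in> carrier_vec n" if "j < n" for j using uc that dn by simp
  have u2c: "u (2+j) \<in> carrier_vec n" if "j < n" for j using uc that dn by simp
  define fW where "fW j = (if j = 0 then w else u (1+j))" for j
  have fWc: "fW j \<in> carrier_vec n" if "j < n" for j using wc u1c that unfolding fW_def by simp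
  define Gm where "Gm = mat (d-2) (d-2) (\<lambda>(i,j). u (2+i) \<bullet> u (2+j))"
  define X where "X = det (colmat n n fW)"
  define D1 where "D1 = det (colmat n n (\<lambda>j. u (1+j)))"
  define D2 where "D2 = det (colmat n n (\<lambda>j. u (2+j)))"
  have n1: "n - 1 = d - 2" unfolding n_def by simp

  have WW1: "det (mat n n (\<lambda>(i,j). fW i \<bullet> fW j)) = X * X"
    unfolding X_def by (rule det_gram_sq[OF fWc fWc])
  have WW2: "det (mat n n (\<lambda>(i,j). fW i \<bullet> fW j)) = (w \<bullet> w) * det Gm"
  proof -
    let ?M = "mat n n (\<lambda>(i,j). fW i \<bullet> fW j)"
    have "det ?M = ?M $$ (0,0) * cofactor ?M 0 0"
    proof (rule single_entry_row[of _ n])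
      fix j assume "j < n" "j \<noteq> 0"
      thus "?M $$ (0,j) = 0" using w0[of "1+j"] n2 unfolding fW_def by simp
    qed (use n2 in auto)
    moreover have "mat_delete ?M 0 0 = Gm" unfolding mat_delete_def Gm_def
      by (rule eq_matI) (use n2 in \<open>auto simp: fW_def dn\<close>)
    ultimately show ?thesis using n2 unfolding cofactor_def by (simp add: fW_def)
  qed
  have WU1: "det (mat n n (\<lambda>(i,j). fW i \<bullet> u (1+j))) = X * D1"
    unfolding X_def D1_def by (rule det_gram_sq[OF fWc u1c])
  have WU2: "det (mat n n (\<lambda>(i,j). fW i \<bullet> u (1+j))) = (w \<bullet> u 1) * det Gm"
  proof -
    let ?M = "mat n n (\<lambda>(i,j). fW i \<bullet> u (1+j))"
    have "det ?M = ?M $$ (0,0) * cofactor ?M 0 0"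
    proof (rule single_entry_row[of _ n])
      fix j assume "j < n" "j \<noteq> 0"
      thus "?M $$ (0,j) = 0" using w0[of "1+j"] n2 unfolding fW_def by simp
    qed (use n2 in auto)
    moreover have "mat_delete ?M 0 0 = Gm" unfolding mat_delete_def Gm_def
      by (rule eq_matI) (use n2 in \<open>auto simp: fW_def dn\<close>)
    ultimately show ?thesis using n2 unfolding cofactor_def by (simp add: fW_def)
  qed

  define gv where "gv i = (if i = n then A2 else unit_vec d i)" for i
  have gvc: "gv i \<in> carrier_vec d" if "i < d" for i using A2c unfolding gv_def by simp
  have zc1: "z (j+1) \<in> carrier_vec d" if "j < d" for j using zc that by simp
  define DZ where "DZ = det (colmat d d (\<lambda>j. z (j+1)))"
  define Mz where "Mz = mat d d (\<lambda>(i,j). gv i \<bullet> z (j+1))"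
  have Mz1: "det Mz = det (colmat d d gv) * DZ"
    unfolding Mz_def DZ_def by (rule det_gram_sq[OF gvc zc1])
  have ut: "upper_triangular (colmat d d gv)"
    unfolding upper_triangular_def using dn by (auto simp: gv_def)
  have "det (colmat d d gv) = (\<Prod>i = 0..<d. colmat d d gv $$ (i,i))"
    unfolding det_upper_triangular[OF ut colmat_carrier] prod_list_diag_prod by simp
  also have "\<dots> = 1" by (rule prod.neutral) (use A2n in \<open>auto simp: gv_def\<close>)
  finally have Cg: "det (colmat d d gv) = 1" .
  have Mz2: "det Mz = Mz $$ (n,0) * cofactor Mz n 0"
  proof (rule single_entry_row[of _ d])
    fix j assume "j < d" "j \<noteq> 0"
    thus "Mz $$ (n,j) = 0" using A2o[of "j+1"] dn unfolding Mz_def gv_def by simp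
  qed (use dn in \<open>auto simp: Mz_def\<close>)
  have Md: "mat_delete Mz n 0 = colmat n n (\<lambda>j. u (2+j))"
    unfolding mat_delete_def Mz_def
    by (rule eq_matI) (use dn zc1 in \<open>auto simp: gv_def uz\<close>)
  have ZD: "\<bar>DZ\<bar> = \<bar>A2 \<bullet> z 1\<bar> * \<bar>D2\<bar>"
  proof -
    have "DZ = Mz $$ (n,0) * ((-1)^n * D2)"
      using Mz1 Mz2 Cg Md unfolding cofactor_def D2_def by simp
    moreover have "Mz $$ (n,0) = A2 \<bullet> z 1" unfolding Mz_def gv_def using dn by simp
    ultimately show ?thesis by (simp add: abs_mult power_abs)
  qed

  have i1: "lin_indep_family n n (\<lambda>j. u (1+j))" using assms(4) unfolding u_def n_def .
  have i2: "lin_indep_family n n (\<lambda>j. u (2+j))" using assms(5) unfolding u_def n_def .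
  have DZ0: "DZ \<noteq> 0" unfolding DZ_def by (rule indep_det[OF assms(3)])
  have D10: "D1 \<noteq> 0" unfolding D1_def by (rule indep_det[OF i1])
  have D20: "D2 \<noteq> 0" unfolding D2_def by (rule indep_det[OF i2])
  have "lin_indep_family n (d-2) (\<lambda>j. u (1 + Suc j))"
  proof (rule indep_shift)
    have "Suc (d-2) = n" using dn n2 by simp
    thus "lin_indep_family n (Suc (d-2)) (\<lambda>j. u (1+j))" using i1 by simp
  qed
  moreover have "(\<lambda>j. u (1 + Suc j)) = (\<lambda>j. u (2+j))" by simp
  ultimately have i3: "lin_indep_family n (d-2) (\<lambda>j. u (2+j))" by simp
  have G0: "det Gm \<noteq> 0" unfolding Gm_def
    by (rule indep_gram_det[OF i3]) (use u2c dn in simp)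

  have Lf: "detLam_full d z = \<bar>DZ\<bar>"
  proof -
    have "mat_of_cols d (map z [1..<d+1]) = colmat d d (\<lambda>j. z (j+1))"
      unfolding mat_of_cols_def colmat_def by (rule eq_matI) (auto simp del: upt_Suc)
    thus ?thesis unfolding detLam_full_def DZ_def by simp
  qed
  have L1: "detLam_under z 1 (d-1) = \<bar>D1\<bar>"
  proof -
    have "detLam_under z 1 (d-1) = sqrt (det (mat n n (\<lambda>(i,j). u (1+i) \<bullet> u (1+j))))"
      unfolding detLam_under_def par_volume_def u_def n_def by simp
    also have "det (mat n n (\<lambda>(i,j). u (1+i) \<bullet> u (1+j))) = D1 * D1"
      unfolding D1_def by (rule det_gram_sq[OF u1c u1c])
    finally show ?thesis by simp
  qed
  have L2: "detLam_under z 2 (d-1) = \<bar>D2\<bar>"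
  proof -
    have "detLam_under z 2 (d-1) = sqrt (det (mat n n (\<lambda>(i,j). u (2+i) \<bullet> u (2+j))))"
      unfolding detLam_under_def par_volume_def u_def n_def by simp
    also have "det (mat n n (\<lambda>(i,j). u (2+i) \<bullet> u (2+j))) = D2 * D2"
      unfolding D2_def by (rule det_gram_sq[OF u2c u2c])
    finally show ?thesis by simp
  qed
  have L3: "detLam_under z 2 (d-2) = sqrt (det Gm)"
    unfolding detLam_under_def par_volume_def Gm_def u_def by simp

  have "sqrt (w \<bullet> w) = sqrt (det Gm) * \<bar>DZ\<bar> / (\<bar>D1\<bar> * \<bar>D2\<bar>)"
  proof (rule final_alg[where X = X and c = "A2 \<bullet> z 1"])
    show "X^2 = (w \<bullet> w) * det Gm" using WW1 WW2 by (simp add: power2_eq_square)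
    show "X * D1 = - (A2 \<bullet> z 1) * det Gm" using WU1 WU2 w1 by simp
  qed (use ZD DZ0 D10 D20 G0 ww_nonneg in auto)
  thus ?thesis unfolding nrm Lf L1 L2 L3 .
qed

end
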